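(* Assume that $\Omega$ is uniformly $c$-convex with respect to $\Omega^*$ and $\Omega^*$ is uniformly $c^*$-convex with respect to $\Omega$. Then there exist $C^2$ functions $h$ on $\Omega$ and $h^*$ on $\Omega^*$, and constants $\epsilon,\epsilon^*,\delta_0,\delta_0^*>0$, such that: (1) $\nabla h=\nu$ on $\partial\Omega$; (2) $h<0$ on $\Gamma_\epsilon$; (3) $[D_{ij}h(x)-c^{l,k}c_{ij,l}(x,y)D_kh(x)]\xi_i\xi_j\ge\delta_0|\xi|^2$ for all $x\in\Gamma_\epsilon$, $y\in\Omega^*$, $\xi\in\mathbb R^n$; (4) $\nabla h^*=\nu^*$ on $\partial\Omega^*$; (5) $h^*<0$ on $\Gamma^*_{\epsilon^*}$; (6) $[D_{ij}h^*(y)-c^{k,l}c_{l,ij}(x,y)D_kh^*(y)]\xi_i\xi_j\ge\delta_0^*|\xi|^2$ for all $y\in\Gamma^*_{\epsilon^*}$, $x\in\Omega$, $\xi\in\mathbb R^n$.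
   Context: $\Omega,\Omega^*\subset\mathbb R^n$ are open, bounded domains with smooth boundary, with outer unit normals $\nu,\nu^*$. The cost $c\in C^{4+\alpha}(\overline\Omega\times\overline{\Omega^*})$ satisfies: for each $x$ the map $y\mapsto\nabla_xc(x,y)$ is injective and for each $y$ the map $x\mapsto\nabla_yc(x,y)$ is injective; $\det D^2_{xy}c\ne0$ on $\overline\Omega\times\overline{\Omega^*}$. Notation: $c_{ij\ldots,kl\ldots}=\partial_{x_i}\partial_{x_j}\cdots\partial_{y_k}\partial_{y_l}\cdots c$, $c^{i,j}$ are the entries of the inverse of the matrix $(c_{i,j})$; summation convention. $\Omega$ is uniformly $c$-convex w.r.t. $\Omega^*$ if $\nabla_yc(\Omega,y)$ is convex for each $y\in\Omega^*$ and $[D_i\nu_j(x)-c^{l,k}c_{ij,l}(x,y)\nu_k(x)]\tau_i\tau_j\ge\delta_1$ for some $\delta_1>0$, all $x\in\partial\Omega$, $y\in\Omega^*$ and unit tangent vectors $\tau$ to $\partial\Omega$ at $x$. $\Omega^*$ is uniformly $c^*$-convex w.r.t. $\Omega$ if $\nabla_xc(x,\Omega^* )$ is convex for each $x\in\Omega$ and $[D_i\nu^*_j(y)-c^{k,l}c_{l,ij}(x,y)\nu^*_k(y)]\tau^*_i\tau^*_j\ge\delta_1^*>0$ for all $y\in\partial\Omega^*$, $x\in\Omega$, unit tangent $\tau^*$. $\Gamma_\epsilon=\{x\in\Omega:\operatorname{dist}(x,\partial\Omega)<\epsilon\}$ and $\Gamma^*_{\epsilon^*}=\{y\in\Omega^*:\operatorname{dist}(y,\partial\Omega^*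 )<\epsilon^*\}$. *)

theory Defs
  imports "HOL-Analysis.Analysis"
begin

definition dderiv :: "('a::real_normed_vector \<Rightarrow> real) \<Rightarrow> 'a \<Rightarrow> 'a \<Rightarrow> real" where
  "dderiv f v = (\<lambda>z. frechet_derivative f (at z) v)"

fun Ck :: "nat \<Rightarrow> 'a::euclidean_space set \<Rightarrow> ('a \<Rightarrow> real) \<Rightarrow> bool" where
  "Ck 0 U f = continuous_on U f"
| "Ck (Suc k) U f = (continuous_on U f \<and> f differentiable_on U \<and>
      (\<forall>b\<in>Basis. Ck k U (dderiv f b)))"

definition smooth_on :: "'a::euclidean_space set \<Rightarrow> ('a \<Rightarrow> real) \<Rightarrow> bool" where
  "smooth_on U f = (\<forall>k. Ck k U f)"

fun pdl :: "'a::real_normed_vector list \<Rightarrow> ('a \<Rightarrow> real) \<Rightarrow> 'a \<Rightarrow> real" where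
  "pdl [] f = f"
| "pdl (b # bs) f = dderiv (pdl bs f) b"

definition holder_on :: "real \<Rightarrow> 'a::metric_space set \<Rightarrow> ('a \<Rightarrow> real) \<Rightarrow> bool" where
  "holder_on \<alpha> S g = (\<exists>K. \<forall>z\<in>S. \<forall>w\<in>S. \<bar>g z - g w\<bar> \<le> K * dist z w powr \<alpha>)"

definition Ck_alpha :: "nat \<Rightarrow> real \<Rightarrow> 'a::euclidean_space set \<Rightarrow> ('a \<Rightarrow> real) \<Rightarrow> bool" where
  "Ck_alpha k \<alpha> S f = (\<exists>U. open U \<and> S \<subseteq> U \<and> Ck k U f \<and>
      (\<forall>bs. length bs = k \<and> set bs \<subseteq> Basis \<longrightarrow> holder_on \<alpha> S (pdl bs f)))"

definition grad :: "(real^'n \<Rightarrow> real) \<Rightarrow> real^'n \<Rightarrow> real^'n" where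
  "grad f x = (\<chi> i. dderiv f (axis i 1) x)"

definition D2 :: "(real^'n \<Rightarrow> real) \<Rightarrow> 'n \<Rightarrow> 'n \<Rightarrow> real^'n \<Rightarrow> real" where
  "D2 f i j = dderiv (dderiv f (axis j 1)) (axis i 1)"

definition cX :: "'n \<Rightarrow> ((real^'n) \<times> (real^'n) \<Rightarrow> real) \<Rightarrow> (real^'n) \<times> (real^'n) \<Rightarrow> real" where
  "cX i c = dderiv c (axis i 1, 0)"

definition cY :: "'n \<Rightarrow> ((real^'n) \<times> (real^'n) \<Rightarrow> real) \<Rightarrow> (real^'n) \<times> (real^'n) \<Rightarrow> real" where
  "cY k c = dderiv c (0, axis k 1)"

definition gradX :: "((real^'n) \<times> (real^'n) \<Rightarrow> real) \<Rightarrow> real^'n \<Rightarrow> real^'n \<Rightarrow> real^'n" where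
  "gradX c x y = (\<chi> i. cX i c (x, y))"

definition gradY :: "((real^'n) \<times> (real^'n) \<Rightarrow> real) \<Rightarrow> real^'n \<Rightarrow> real^'n \<Rightarrow> real^'n" where
  "gradY c x y = (\<chi> k. cY k c (x, y))"

definition cmix :: "((real^'n) \<times> (real^'n) \<Rightarrow> real) \<Rightarrow> real^'n \<Rightarrow> real^'n \<Rightarrow> real^'n^'n" where
  "cmix c x y = (\<chi> i j. cY j (cX i c) (x, y))"

definition cinv :: "((real^'n) \<times> (real^'n) \<Rightarrow> real) \<Rightarrow> real^'n \<Rightarrow> real^'n \<Rightarrow> 'n \<Rightarrow> 'n \<Rightarrow> real" where
  "cinv c x y i j = matrix_inv (cmix c x y) $ i $ j"

definition cXXY :: "((real^'n) \<times> (real^'n) \<Rightarrow> real) \<Rightarrow> 'n \<Rightarrow> 'n \<Rightarrow> 'n \<Rightarrow> real^'n \<Rightarrow> real^'n \<Rightarrow> real" where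
  "cXXY c i j l x y = cX i (cX j (cY l c)) (x, y)"

definition cXYY :: "((real^'n) \<times> (real^'n) \<Rightarrow> real) \<Rightarrow> 'n \<Rightarrow> 'n \<Rightarrow> 'n \<Rightarrow> real^'n \<Rightarrow> real^'n \<Rightarrow> real" where
  "cXYY c l i j x y = cX l (cY i (cY j c)) (x, y)"

text \<open>Open bounded domain (connected) with smooth boundary, and nu is its outer unit normal:
  there is a smooth defining function rho near the boundary with nonvanishing gradient,
  Omega = {rho < 0} near the boundary, and nu = grad rho / |grad rho| there
  (thus nu is a smooth extension of the outer unit normal to a neighbourhood of the boundary).\<close>
definition smooth_domain_normal :: "(real^'n) set \<Rightarrow> (real^'n \<Rightarrow> real^'n) \<Rightarrow> bool" where
  "smooth_domain_normal \<Omega> \<nu> = (open \<Omega> \<and> bounded \<Omega> \<and> connected \<Omega> \<and> \<Omega> \<noteq> {} \<and>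
     (\<exists>\<rho> U. open U \<and> frontier \<Omega> \<subseteq> U \<and> smooth_on U \<rho> \<and>
        (\<forall>x\<in>U. x \<in> \<Omega> \<longleftrightarrow> \<rho> x < 0) \<and>
        (\<forall>x\<in>U. grad \<rho> x \<noteq> 0 \<and> \<nu> x = (1 / norm (grad \<rho> x)) *\<^sub>R grad \<rho> x)))"

definition Dvec :: "(real^'n \<Rightarrow> real^'n) \<Rightarrow> 'n \<Rightarrow> 'n \<Rightarrow> real^'n \<Rightarrow> real" where
  "Dvec \<nu> i j = dderiv (\<lambda>z. \<nu> z $ j) (axis i 1)"

definition unif_c_convex ::
  "((real^'n) \<times> (real^'n) \<Rightarrow> real) \<Rightarrow> (real^'n) set \<Rightarrow> (real^'n \<Rightarrow> real^'n) \<Rightarrow> (real^'n) set \<Rightarrow> bool" where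
  "unif_c_convex c \<Omega> \<nu> \<Omega>s = ((\<forall>y\<in>\<Omega>s. convex ((\<lambda>x. gradY c x y) ` \<Omega>)) \<and>
     (\<exists>\<delta>1>0. \<forall>x\<in>frontier \<Omega>. \<forall>y\<in>\<Omega>s. \<forall>\<tau>. norm \<tau> = 1 \<and> \<tau> \<bullet> \<nu> x = 0 \<longrightarrow>
        (\<Sum>i\<in>UNIV. \<Sum>j\<in>UNIV. (Dvec \<nu> i j x
            - (\<Sum>l\<in>UNIV. \<Sum>k\<in>UNIV. cinv c x y l k * cXXY c i j l x y * (\<nu> x $ k)))
          * \<tau> $ i * \<tau> $ j) \<ge> \<delta>1))"

definition unif_cstar_convex ::
  "((real^'n) \<times> (real^'n) \<Rightarrow> real) \<Rightarrow> (real^'n) set \<Rightarrow> (real^'n \<Rightarrow> real^'n) \<Rightarrow> (real^'n) set \<Rightarrow> bool" where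
  "unif_cstar_convex c \<Omega>s \<nu>s \<Omega> = ((\<forall>x\<in>\<Omega>. convex ((\<lambda>y. gradX c x y) ` \<Omega>s)) \<and>
     (\<exists>\<delta>1s>0. \<forall>y\<in>frontier \<Omega>s. \<forall>x\<in>\<Omega>. \<forall>\<tau>. norm \<tau> = 1 \<and> \<tau> \<bullet> \<nu>s y = 0 \<longrightarrow>
        (\<Sum>i\<in>UNIV. \<Sum>j\<in>UNIV. (Dvec \<nu>s i j y
            - (\<Sum>k\<in>UNIV. \<Sum>l\<in>UNIV. cinv c x y k l * cXYY c l i j x y * (\<nu>s y $ k)))
          * \<tau> $ i * \<tau> $ j) \<ge> \<delta>1s))"

definition strip :: "(real^'n) set \<Rightarrow> real \<Rightarrow> (real^'n) set" where
  "strip \<Omega> \<epsilon> = {x\<in>\<Omega>. infdist x (frontier \<Omega>) < \<epsilon>}"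

end

theory Submission
  imports Defs
begin


lemma dderiv_at: "(f has_derivative f') (at x) \<Longrightarrow> dderiv f v x = f' v"
  unfolding dderiv_def using frechet_derivative_at by metis

lemma dderiv_cong:
  assumes "open U" "x \<in> U" "\<And>z. z \<in> U \<Longrightarrow> f z = g z"
  shows "dderiv f v x = dderiv g v x"
proof -
  have "(f has_derivative f') (at x) \<longleftrightarrow> (g has_derivative f') (at x)" for f'
    using has_derivative_transform_within_open assms by metis
  then show ?thesis unfolding dderiv_def frechet_derivative_def by simp
qed

lemma differentiable_on_cong_open:
  assumes "open U" "\<And>z. z \<in> U \<Longrightarrow> f z = g z" "f differentiable_on U"
  shows "g differentiable_on U"
  using assms unfolding differentiable_on_eq_differentiable_at[OF assms(1)] differentiable_def
  using has_derivative_transform_within_open by metis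

lemma Ck_cont: "Ck k U f \<Longrightarrow> continuous_on U f"
  by (cases k) auto

lemma Ck_mono: "Ck (Suc k) U f \<Longrightarrow> Ck k U f"
proof (induction k arbitrary: f)
  case 0 then show ?case by simp
next
  case (Suc k) then show ?case by auto
qed

lemma Ck_mono_le: "Ck k U f \<Longrightarrow> m \<le> k \<Longrightarrow> Ck m U f"
proof (induction k)
  case 0 then show ?case by simp
next
  case (Suc k) then show ?case using Ck_mono[of k U f] by (auto simp: le_Suc_eq)
qed

lemma Ck_cong:
  assumes "open U" "\<And>z. z \<in> U \<Longrightarrow> f z = g z" "Ck k U f"
  shows "Ck k U g"
  using assms
proof (induction k arbitrary: f g)
  case 0 then show ?case using continuous_on_cong by (metis Ck.simps(1))
next
  case (Suc k)
  have "continuous_on U g" using Suc.prems continuous_on_cong by (metis Ck.simps(2))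
  moreover have "g differentiable_on U" using Suc.prems differentiable_on_cong_open by (metis Ck.simps(2))
  moreover have "Ck k U (dderiv g b)" if "b \<in> Basis" for b
    using Suc.IH[of "dderiv f b" "dderiv g b"] Suc.prems that dderiv_cong[OF Suc.prems(1) _ Suc.prems(2)]
    by auto
  ultimately show ?case by simp
qed

lemma Ck_subset:
  assumes "open V" "V \<subseteq> U" "Ck k U f"
  shows "Ck k V f"
  using assms
proof (induction k arbitrary: f)
  case 0 then show ?case using continuous_on_subset by auto
next
  case (Suc k) then show ?case using continuous_on_subset differentiable_on_subset by auto
qed

lemma Ck_Un:
  assumes "open A" "open B" "Ck k A f" "Ck k B f"
  shows "Ck k (A \<union> B) f"
  using assms
proof (induction k arbitrary: f)
  case 0 then show ?case using continuous_on_open_Un by auto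
next
  case (Suc k)
  have "f differentiable_on (A \<union> B)"
    using Suc.prems by (auto simp: differentiable_on_eq_differentiable_at open_Un)
  then show ?case using Suc continuous_on_open_Un by auto
qed

lemma dderiv_const: "dderiv (\<lambda>_. c) v = (\<lambda>_. 0)"
  unfolding dderiv_def using frechet_derivative_at[OF has_derivative_const] by (auto simp: fun_eq_iff)

lemma Ck_const: "Ck k U (\<lambda>_. c)"
  by (induction k arbitrary: c) (auto simp: dderiv_const)

lemma Ck_diff_at: "Ck (Suc k) U f \<Longrightarrow> open U \<Longrightarrow> x \<in> U \<Longrightarrow> (f has_derivative frechet_derivative f (at x)) (at x)"
  using differentiable_on_eq_differentiable_at frechet_derivative_works by (metis Ck.simps(2))

lemma Ck_add:
  assumes "open U" "Ck k U f" "Ck k U g"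
  shows "Ck k U (\<lambda>x. f x + g x)"
  using assms(2,3)
proof (induction k arbitrary: f g)
  case 0 then show ?case by (auto intro: continuous_on_add)
next
  case (Suc k)
  have d: "dderiv (\<lambda>x. f x + g x) b x = dderiv f b x + dderiv g b x" if "x \<in> U" for b x
    using dderiv_at[OF has_derivative_add[OF Ck_diff_at[OF Suc.prems(1) assms(1) that] Ck_diff_at[OF Suc.prems(2) assms(1) that]]]
    by (simp add: dderiv_def)
  have "Ck k U (dderiv (\<lambda>x. f x + g x) b)" if "b \<in> Basis" for b
    by (rule Ck_cong[OF assms(1), of "\<lambda>x. dderiv f b x + dderiv g b x"]) (use d Suc that in auto)
  then show ?case using Suc.prems by (auto intro: continuous_on_add differentiable_on_add)
qed

lemma Ck_mult:
  assumes "open U" "Ck k U f" "Ck k U g"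
  shows "Ck k U (\<lambda>x. f x * g x)"
  using assms(2,3)
proof (induction k arbitrary: f g)
  case 0 then show ?case by (auto intro: continuous_on_mult)
next
  case (Suc k)
  have d: "dderiv (\<lambda>x. f x * g x) b x = f x * dderiv g b x + dderiv f b x * g x" if "x \<in> U" for b x
    using dderiv_at[OF has_derivative_mult[OF Ck_diff_at[OF Suc.prems(1) assms(1) that] Ck_diff_at[OF Suc.prems(2) assms(1) that]]]
    by (simp add: dderiv_def)
  have "Ck k U (dderiv (\<lambda>x. f x * g x) b)" if "b \<in> Basis" for b
    by (rule Ck_cong[OF assms(1), of "\<lambda>x. f x * dderiv g b x + dderiv f b x * g x"])
      (use d that in simp, rule Ck_add[OF assms(1)],
       (rule Suc.IH; use Ck_mono[OF Suc.prems(1)] Ck_mono[OF Suc.prems(2)] Suc.prems that in auto)+)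
  then show ?case using Suc.prems by (auto intro: continuous_on_mult differentiable_on_mult)
qed

lemma Ck_sum:
  assumes "open U" "finite I" "\<And>i. i \<in> I \<Longrightarrow> Ck k U (f i)"
  shows "Ck k U (\<lambda>x. \<Sum>i\<in>I. f i x)"
  using assms(2,3)
proof (induction I rule: finite_induct)
  case empty then show ?case using Ck_const by simp
next
  case (insert i I) then show ?case using Ck_add[OF assms(1)] by simp
qed

lemma Ck_comp:
  assumes "open U" "open S" "\<And>x. x \<in> U \<Longrightarrow> f x \<in> S" "Ck k U f"
    "\<And>j t. j < k \<Longrightarrow> t \<in> S \<Longrightarrow> (\<phi> (m+j) has_real_derivative \<phi> (Suc (m+j)) t) (at t)"
    "continuous_on S (\<phi> (m+k))"
  shows "Ck k U (\<lambda>x. \<phi> m (f x))"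
  using assms(4-6)
proof (induction k arbitrary: m)
  case 0 then show ?case using assms(3) by (auto intro: continuous_on_compose2)
next
  case (Suc k)
  have dphi: "(\<phi> m has_derivative (\<lambda>h. \<phi> (Suc m) t * h)) (at t)" if "t \<in> S" for t
    using Suc.prems(2)[of 0 t] that by (simp add: has_field_derivative_imp_has_derivative has_field_derivative_def mult.commute[of _ "\<phi> (Suc m) t"])
  have cphi: "continuous_on S (\<phi> m)"
    using dphi by (metis continuous_on_eq_continuous_at[OF assms(2)] has_derivative_continuous)
  have hd: "((\<lambda>x. \<phi> m (f x)) has_derivative (\<lambda>h. \<phi> (Suc m) (f x) * frechet_derivative f (at x) h)) (at x)" if "x \<in> U" for x
    using has_derivative_compose[OF Ck_diff_at[OF Suc.prems(1) assms(1) that] dphi[OF assms(3)[OF that]]]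
    by (simp add: o_def)
  have d: "dderiv (\<lambda>x. \<phi> m (f x)) b x = \<phi> (Suc m) (f x) * dderiv f b x" if "x \<in> U" for b x
    using dderiv_at[OF hd[OF that]] by (simp add: dderiv_def)
  have IH: "Ck k U (\<lambda>x. \<phi> (Suc m) (f x))"
    by (rule Suc.IH[of "Suc m"]) (use Ck_mono[OF Suc.prems(1)] Suc.prems(3) Suc.prems(2)[of "Suc _"] in auto)
  have "Ck k U (dderiv (\<lambda>x. \<phi> m (f x)) b)" if "b \<in> Basis" for b
    by (rule Ck_cong[OF assms(1), of "\<lambda>x. \<phi> (Suc m) (f x) * dderiv f b x"])
      (use d Suc.prems that Ck_mult[OF assms(1) IH] in auto)
  moreover have "continuous_on U (\<lambda>x. \<phi> m (f x))"
    using continuous_on_compose2[OF cphi Ck_cont[OF Suc.prems(1)]] assms(3) by auto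
  moreover have "(\<lambda>x. \<phi> m (f x)) differentiable_on U"
    using hd by (auto simp: differentiable_on_eq_differentiable_at[OF assms(1)] differentiable_def)
  ultimately show ?case by simp
qed




definition bil :: "('n::finite \<Rightarrow> 'n \<Rightarrow> real) \<Rightarrow> real^'n \<Rightarrow> real^'n \<Rightarrow> real" where
  "bil B u w = (\<Sum>i\<in>UNIV. \<Sum>j\<in>UNIV. B i j * u$i * w$j)"

lemma bil_add1: "bil B (u + u') w = bil B u w + bil B u' w"
  unfolding bil_def by (simp add: algebra_simps sum.distrib)
lemma bil_add2: "bil B u (w + w') = bil B u w + bil B u w'"
  unfolding bil_def by (simp add: algebra_simps sum.distrib)
lemma bil_scale1: "bil B (c *\<^sub>R u) w = c * bil B u w"
  unfolding bil_def by (simp add: sum_distrib_left algebra_simps)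
lemma bil_scale2: "bil B u (c *\<^sub>R w) = c * bil B u w"
  unfolding bil_def by (simp add: sum_distrib_left algebra_simps)

lemma bil_bound:
  fixes B :: "'n::finite \<Rightarrow> 'n \<Rightarrow> real"
  assumes "\<And>i j. \<bar>B i j\<bar> \<le> M"
  shows "\<bar>bil B u w\<bar> \<le> (M * real (CARD('n::finite))^2) * norm u * norm w"
proof -
  have M0: "0 \<le> M" using assms[of undefined undefined] by simp
  have "\<bar>bil B u w\<bar> \<le> (\<Sum>i\<in>(UNIV::'n set). \<Sum>j\<in>UNIV. \<bar>B i j * u$i * w$j\<bar>)"
    unfolding bil_def by (rule order_trans[OF sum_abs sum_mono]) (rule sum_abs)
  also have "\<dots> \<le> (\<Sum>i\<in>(UNIV::'n set). \<Sum>j\<in>(UNIV::'n set). M * norm u * norm w)"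
  proof (intro sum_mono)
    fix i j
    have "\<bar>B i j * u$i * w$j\<bar> = \<bar>B i j\<bar> * \<bar>u$i\<bar> * \<bar>w$j\<bar>" by (simp add: abs_mult)
    also have "\<dots> \<le> M * norm u * norm w"
      by (intro mult_mono assms component_le_norm_cart) (auto simp: M0)
    finally show "\<bar>B i j * u$i * w$j\<bar> \<le> M * norm u * norm w" .
  qed
  also have "\<dots> = (M * real (CARD('n))^2) * norm u * norm w"
    by (simp add: power2_eq_square)
  finally show ?thesis .
qed

lemma inner_vec_sum: "(u::real^'n) \<bullet> w = (\<Sum>i\<in>UNIV. u$i * w$i)"
  by (simp add: inner_vec_def)

lemma bil_rank1: "bil (\<lambda>i j. v$i * v$j) \<xi> \<xi> = (v \<bullet> \<xi>)^2"
  unfolding bil_def inner_vec_sum power2_eq_square sum_product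
  by (intro sum.cong refl) (simp add: algebra_simps)

lemma bil_plus: "bil (\<lambda>i j. A i j + B i j) u w = bil A u w + bil B u w"
  unfolding bil_def by (simp add: algebra_simps sum.distrib)

lemma quad_pos:
  fixes B :: "'n::finite \<Rightarrow> 'n \<Rightarrow> real" and v :: "real^'n"
  assumes v: "norm v = 1" and Bb: "\<And>i j. \<bar>B i j\<bar> \<le> M" and d: "\<delta> > 0"
    and tang: "\<And>t. norm t = 1 \<Longrightarrow> t \<bullet> v = 0 \<Longrightarrow> bil B t t \<ge> \<delta>"
    and K: "2 * K \<ge> \<delta> + M * real (CARD('n))^2 + 2 * (M * real (CARD('n))^2)^2 / \<delta>"
    and xi: "norm \<xi> = 1"
  shows "bil B \<xi> \<xi> + 2 * K * (v \<bullet> \<xi>)^2 \<ge> \<delta> / 2"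
proof -
  define L where "L = M * real (CARD('n))^2"
  have M0: "0 \<le> M" using Bb[of undefined undefined] by simp
  have L0: "0 \<le> L" unfolding L_def using M0 by simp
  have bb: "\<bar>bil B u w\<bar> \<le> L * norm u * norm w" for u w
    unfolding L_def by (rule bil_bound[OF Bb])
  define s where "s = v \<bullet> \<xi>"
  define t where "t = \<xi> - s *\<^sub>R v"
  have vv: "v \<bullet> v = 1" using v by (simp add: dot_square_norm)
  have "t \<bullet> v = \<xi> \<bullet> v - s * (v \<bullet> v)" by (simp add: t_def inner_diff_left)
  then have tv: "t \<bullet> v = 0" unfolding s_def vv by (simp add: inner_commute)
  have xi_eq: "\<xi> = t + s *\<^sub>R v" unfolding t_def by simp
  have nt: "(norm t)^2 + s^2 = 1"
  proof -
    have "1 = \<xi> \<bullet> \<xi>" using xi by (simp add: dot_square_norm)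
    also have "\<dots> = t \<bullet> t + s^2 * (v \<bullet> v) + 2 * s * (t \<bullet> v)"
      unfolding xi_eq by (simp add: inner_add_left inner_add_right inner_commute power2_eq_square algebra_simps)
    finally show ?thesis using tv vv by (simp add: dot_square_norm)
  qed
  have "(norm t)^2 \<le> 1" using nt zero_le_power2[of s] by linarith
  then have t1: "norm t \<le> 1" using abs_square_le_1[of "norm t"] by simp
  have btt: "bil B t t \<ge> \<delta> * (norm t)^2"
  proof (cases "t = 0")
    case True then show ?thesis by (simp add: bil_def)
  next
    case False
    then have nz: "norm t > 0" by simp
    have "bil B ((1/norm t) *\<^sub>R t) ((1/norm t) *\<^sub>R t) \<ge> \<delta>"
      by (rule tang) (use nz tv in \<open>auto simp: inner_scaleR_left\<close>)
    then have "\<delta> \<le> (1/norm t)^2 * bil B t t" by (simp add: bil_scale1 bil_scale2 power2_eq_square)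
    then show ?thesis using nz by (simp add: field_simps power2_eq_square)
  qed
  have expand: "bil B \<xi> \<xi> = bil B t t + s * bil B t v + s * bil B v t + s^2 * bil B v v"
    unfolding xi_eq by (simp add: bil_add1 bil_add2 bil_scale1 bil_scale2 power2_eq_square algebra_simps)
  have b1: "\<bar>bil B t v\<bar> \<le> L" using bb[of t v] t1 v L0 mult_left_le[of "norm t" L] by simp
  have b2: "\<bar>bil B v t\<bar> \<le> L" using bb[of v t] t1 v L0 mult_left_le[of "norm t" L] by simp
  have b3: "\<bar>bil B v v\<bar> \<le> L" using bb[of v v] v by simp
  have c1': "\<bar>s * bil B t v\<bar> \<le> \<bar>s\<bar> * L" using b1 by (simp add: abs_mult mult_left_mono)
  have c2': "\<bar>s * bil B v t\<bar> \<le> \<bar>s\<bar> * L" using b2 by (simp add: abs_mult mult_left_mono)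
  have c3': "\<bar>s^2 * bil B v v\<bar> \<le> s^2 * L" using b3 by (simp add: abs_mult mult_left_mono)
  have c1: "s * bil B t v \<ge> - (L * \<bar>s\<bar>)" using c1' by (simp add: mult.commute abs_le_iff)
  have c2: "s * bil B v t \<ge> - (L * \<bar>s\<bar>)" using c2' by (simp add: mult.commute abs_le_iff)
  have c3: "s^2 * bil B v v \<ge> - (L * s^2)" using c3' by (simp add: mult.commute abs_le_iff)
  have amgm0: "2 * L * \<bar>s\<bar> \<le> \<delta>/2 + 2 * L^2 * s^2 / \<delta>"
  proof -
    have "0 \<le> (\<delta> - 2 * L * \<bar>s\<bar>)^2 / (2*\<delta>)" using d by simp
    also have "\<dots> = \<delta>/2 + 2 * L^2 * s^2 / \<delta> - 2 * L * \<bar>s\<bar>"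
      using d by (simp add: power2_eq_square field_simps)
    finally show ?thesis by simp
  qed
  have amgm: "2 * (L * \<bar>s\<bar>) \<le> \<delta>/2 + 2 * L^2 * s^2 / \<delta>" using amgm0 by simp
  have K': "2 * K \<ge> \<delta> + L + 2 * L^2 / \<delta>" using K unfolding L_def .
  have "(2 * K - \<delta> - L - 2 * L^2 / \<delta>) * s^2 \<ge> 0" using K' by simp
  then have "2 * K * s^2 - \<delta> * s^2 - L * s^2 - 2 * L^2 * s^2 / \<delta> \<ge> 0" by (simp add: algebra_simps)
  then have kk: "(2 * K) * s^2 - \<delta> * s^2 - L * s^2 - 2 * L^2 * s^2 / \<delta> \<ge> 0" by simp
  moreover have "(norm t)^2 = 1 - s^2" using nt by simp
  then have "\<delta> * (norm t)^2 = \<delta> - \<delta> * s^2" by (simp add: right_diff_distrib)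
  ultimately show ?thesis unfolding expand s_def[symmetric]
    using btt c1 c2 c3 amgm by linarith
qed




lemma Ck_diffat: "Ck (Suc k) U f \<Longrightarrow> open U \<Longrightarrow> x \<in> U \<Longrightarrow> f differentiable (at x)"
  using differentiable_on_eq_differentiable_at by (metis Ck.simps(2))

lemma dderiv_add_at:
  "f differentiable (at x) \<Longrightarrow> g differentiable (at x) \<Longrightarrow>
   dderiv (\<lambda>x. f x + g x) v x = dderiv f v x + dderiv g v x"
  using dderiv_at[OF has_derivative_add[OF frechet_derivative_works[THEN iffD1] frechet_derivative_works[THEN iffD1]]]
  by (simp add: dderiv_def)

lemma dderiv_mult_at:
  "f differentiable (at x) \<Longrightarrow> g differentiable (at x) \<Longrightarrow>
   dderiv (\<lambda>x. f x * g x) v x = f x * dderiv g v x + dderiv f v x * g x"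
  using dderiv_at[OF has_derivative_mult[OF frechet_derivative_works[THEN iffD1] frechet_derivative_works[THEN iffD1]]]
  by (simp add: dderiv_def)

lemma dderiv_comp_at:
  assumes "(\<phi> has_real_derivative d) (at (f x))" "f differentiable (at x)"
  shows "dderiv (\<lambda>x. \<phi> (f x)) v x = d * dderiv f v x"
proof -
  have "(\<phi> has_derivative (\<lambda>h. d * h)) (at (f x))"
    using assms(1) by (simp add: has_field_derivative_def mult.commute[of _ d])
  from has_derivative_compose[OF frechet_derivative_works[THEN iffD1, OF assms(2)] this]
  show ?thesis using dderiv_at by (fastforce simp: o_def dderiv_def)
qed

definition upos :: "real \<Rightarrow> real" where "upos t = max t 0"

lemma upos_sq: "upos h ^ 2 = h * upos h" unfolding upos_def by (simp add: max_def power2_eq_square)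
lemma upos_cube: "upos h ^ 3 = h * upos h ^ 2" unfolding upos_def by (simp add: max_def power3_eq_cube power2_eq_square)

lemma cont_upos: "continuous_on S upos" unfolding upos_def[abs_def] by (intro continuous_intros)
lemma isCont_upos: "isCont upos x" unfolding upos_def[abs_def] by (intro continuous_intros)

lemma upos_deriv_gen:
  assumes "\<And>h. upos h ^ Suc n = h * upos h ^ n" "n \<ge> 1"
  shows "((\<lambda>t. upos t ^ Suc n) has_real_derivative (real (Suc n) * upos t ^ n)) (at t)"
proof (cases "t = 0")
  case True
  have "((\<lambda>h. (upos (0 + h) ^ Suc n - upos 0 ^ Suc n) / h) \<longlongrightarrow> real (Suc n) * upos 0 ^ n) (at 0)"
  proof -
    have c: "isCont (\<lambda>h. upos h ^ n) 0" using cont_upos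
      by (intro continuous_intros isCont_upos)
    have L: "((\<lambda>h. upos h ^ n) \<longlongrightarrow> upos 0 ^ n) (at 0)" using c isCont_def by blast
    have z: "upos 0 ^ n = 0" "real (Suc n) * upos 0 ^ n = 0" using assms(2) by (simp_all add: upos_def)
    have E: "\<forall>\<^sub>F h in at 0. upos h ^ n = (upos (0 + h) ^ Suc n - upos 0 ^ Suc n) / h"
    proof -
      have ev: "\<forall>\<^sub>F h in at (0::real). h \<noteq> 0" by (simp add: eventually_at_filter)
      have u0: "upos 0 = 0" by (simp add: upos_def)
      show ?thesis
      proof (rule eventually_mono[OF ev])
        fix h :: real assume h: "h \<noteq> 0"
        have "upos (0+h)^Suc n - upos 0^Suc n = upos h ^ Suc n" by (simp add: u0)
        also have "\<dots> = h * upos h ^ n" by (rule assms(1))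
        finally show "upos h ^ n = (upos (0+h)^Suc n - upos 0^Suc n) / h" using h by simp
      qed
    qed
    have "((\<lambda>h. (upos (0 + h) ^ Suc n - upos 0 ^ Suc n) / h) \<longlongrightarrow> upos 0 ^ n) (at 0)"
      using tendsto_cong[OF E] L by blast
    then have "((\<lambda>h. (upos (0 + h) ^ Suc n - upos 0 ^ Suc n) / h) \<longlongrightarrow> 0) (at 0)"
      unfolding z(1) .
    then show ?thesis by (simp only: z(2))
  qed
  then show ?thesis using True by (simp add: DERIV_def)
next
  case False
  show ?thesis
  proof (cases "t > 0")
    case True
    have "((\<lambda>t. t ^ Suc n) has_real_derivative (real (Suc n) * t ^ n)) (at t)"
      by (rule derivative_eq_intros refl | simp)+
    moreover have "upos t = t" using True by (simp add: upos_def)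
    ultimately have "((\<lambda>t. t ^ Suc n) has_real_derivative (real (Suc n) * upos t ^ n)) (at t)" by simp
    then show ?thesis
      by (rule has_field_derivative_transform_within_open[where S="{0<..}"]) (use True in \<open>auto simp: upos_def\<close>)
  next
    case False
    with \<open>t \<noteq> 0\<close> have t: "t < 0" by simp
    have "((\<lambda>t. 0) has_real_derivative 0) (at t)" by simp
    then have "((\<lambda>t. 0) has_real_derivative (real (Suc n) * upos t ^ n)) (at t)"
      using t assms(2) by (simp add: upos_def power_0_left)
    then show ?thesis
      by (rule has_field_derivative_transform_within_open[where S="{..<0}"]) (use t assms(2) in \<open>auto simp: upos_def\<close>)
  qed
qed

lemma upos_deriv2: "((\<lambda>t. upos t ^ 2) has_real_derivative (2 * upos t)) (at t)"
  using upos_deriv_gen[of 1 t] upos_sq by (simp add: numeral_2_eq_2)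
lemma upos_deriv3: "((\<lambda>t. upos t ^ 3) has_real_derivative (3 * upos t ^ 2)) (at t)"
  using upos_deriv_gen[of 2 t] upos_cube by (simp add: numeral_3_eq_3 numeral_2_eq_2)

definition phiK :: "real \<Rightarrow> nat \<Rightarrow> real \<Rightarrow> real" where
  "phiK K j t = (if j = 0 then K^2/3 * upos (t + 1/K) ^ 3 - 1/(3*K)
     else if j = 1 then K^2 * upos (t + 1/K) ^ 2 else 2 * K^2 * upos (t + 1/K))"

lemma phiK_deriv0: "(phiK K 0 has_real_derivative phiK K 1 t) (at t)"
proof -
  have g: "((\<lambda>t. t + 1/K) has_real_derivative 1) (at t)" by (rule derivative_eq_intros refl | simp)+
  have "((\<lambda>t. upos (t + 1/K) ^ 3) has_real_derivative (3 * upos (t + 1/K) ^ 2 * 1)) (at t)"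
    using DERIV_chain2[OF upos_deriv3 g] .
  then have "((\<lambda>t. K^2/3 * upos (t + 1/K) ^ 3 - 1/(3*K)) has_real_derivative (K^2/3 * (3 * upos (t + 1/K) ^ 2 * 1) - 0)) (at t)"
    by (intro DERIV_diff DERIV_cmult DERIV_const)
  then show ?thesis unfolding phiK_def[abs_def] by simp
qed

lemma phiK_deriv1: "(phiK K 1 has_real_derivative phiK K 2 t) (at t)"
proof -
  have g: "((\<lambda>t. t + 1/K) has_real_derivative 1) (at t)" by (rule derivative_eq_intros refl | simp)+
  have "((\<lambda>t. upos (t + 1/K) ^ 2) has_real_derivative (2 * upos (t + 1/K) * 1)) (at t)"
    using DERIV_chain2[OF upos_deriv2 g] .
  then have "((\<lambda>t. K^2 * upos (t + 1/K) ^ 2) has_real_derivative (K^2 * (2 * upos (t + 1/K) * 1))) (at t)"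
    by (intro DERIV_cmult)
  then show ?thesis unfolding phiK_def[abs_def] by (simp add: algebra_simps)
qed

lemma phiK_cont2: "continuous_on S (phiK K 2)"
  unfolding phiK_def by (auto intro!: continuous_intros continuous_on_compose2[OF cont_upos])

lemma phiK_vals: "K > 0 \<Longrightarrow> phiK K 0 0 = 0 \<and> phiK K 1 0 = 1 \<and> phiK K 2 0 = 2 * K"
  unfolding phiK_def upos_def by (simp add: power2_eq_square power3_eq_cube field_simps)

lemma phiK_neg: "K > 0 \<Longrightarrow> t < 0 \<Longrightarrow> phiK K 0 t < 0"
proof -
  assume K: "K > 0" and t: "t < 0"
  have u0: "0 \<le> upos (t + 1/K)" and u1: "upos (t + 1/K) < 1/K"
    using t K unfolding upos_def by auto
  have "upos (t + 1/K) ^ 3 < (1/K)^3" by (rule power_strict_mono[OF u1 u0]) auto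
  then have "K^2/3 * upos (t + 1/K) ^ 3 < K^2/3 * (1/K)^3" using K by simp
  also have "\<dots> = 1/(3*K)" using K by (simp add: power2_eq_square power3_eq_cube field_simps)
  finally show ?thesis unfolding phiK_def by simp
qed

lemma phiK_const: "K > 0 \<Longrightarrow> t \<le> -1/K \<Longrightarrow> phiK K 0 t = - 1/(3*K)"
  unfolding phiK_def upos_def by simp




lemma diff_cong_open:
  assumes "open U" "x \<in> U" "\<And>z. z \<in> U \<Longrightarrow> f z = g z" "f differentiable (at x)"
  shows "g differentiable (at x)"
  using assms has_derivative_transform_within_open unfolding differentiable_def by metis

lemma bil_cmul: "bil (\<lambda>i j. c * B i j) u w = c * bil B u w"
  unfolding bil_def by (simp add: sum_distrib_left algebra_simps)

lemma bil_prod: "bil (\<lambda>i j. P i * Q j) u w = (\<Sum>i\<in>UNIV. P i * u$i) * (\<Sum>j\<in>UNIV. Q j * w$j)"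
  unfolding bil_def sum_product by (intro sum.cong refl) (simp add: algebra_simps)

lemma bil_diff: "bil (\<lambda>i j. A i j - B i j) u w = bil A u w - bil B u w"
  unfolding bil_def by (simp add: algebra_simps sum_subtractf)

lemma bil_zero: "bil B 0 0 = 0" unfolding bil_def by simp

lemma grad_nth: "grad f x $ i = dderiv f (axis i 1) x" unfolding grad_def by simp

lemma norm_grad_sqrt: "norm (grad f x) = sqrt (\<Sum>i\<in>UNIV. dderiv f (axis i 1) x * dderiv f (axis i 1) x)"
  unfolding norm_vec_def L2_set_def grad_nth by (simp add: power2_eq_square)

definition pw :: "nat \<Rightarrow> real \<Rightarrow> real" where
  "pw j t = (\<Prod>i<j. (-(1/2) - real i)) * t powr (-(1/2) - real j)"

lemma pw_deriv: "t > 0 \<Longrightarrow> (pw j has_real_derivative pw (Suc j) t) (at t)"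
proof -
  assume t: "t > 0"
  have "((\<lambda>t. (\<Prod>i<j. (-(1/2) - real i)) * t powr (-(1/2) - real j)) has_real_derivative
     (\<Prod>i<j. (-(1/2) - real i)) * ((-(1/2) - real j) * t powr (-(1/2) - real j - 1))) (at t)"
    by (intro DERIV_cmult has_real_derivative_powr t)
  moreover have "(\<Prod>i<j. (-(1/2) - real i)) * ((-(1/2) - real j) * t powr (-(1/2) - real j - 1)) = pw (Suc j) t"
    unfolding pw_def by (simp add: algebra_simps)
  ultimately show ?thesis unfolding pw_def[abs_def] by (simp add: mult.assoc)
qed

lemma pw_cont: "continuous_on {0<..} (pw j)"
  unfolding pw_def[abs_def] by (intro continuous_intros) auto

lemma pw0: "t > 0 \<Longrightarrow> pw 0 t = 1 / sqrt t"
  unfolding pw_def by (simp add: powr_minus_divide powr_half_sqrt)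




lemma main_h:
  fixes \<Omega> :: "(real^'n) set" and \<nu> :: "real^'n \<Rightarrow> real^'n" and Y :: "(real^'n) set"
    and a :: "'n \<Rightarrow> 'n \<Rightarrow> 'n \<Rightarrow> real^'n \<Rightarrow> real^'n \<Rightarrow> real"
  assumes dom: "smooth_domain_normal \<Omega> \<nu>"
    and Yb: "bounded Y"
    and acont: "\<And>i j k. continuous_on (closure \<Omega> \<times> closure Y) (\<lambda>p. a i j k (fst p) (snd p))"
    and conv: "\<exists>\<delta>1>0. \<forall>x\<in>frontier \<Omega>. \<forall>y\<in>Y. \<forall>\<tau>. norm \<tau> = 1 \<and> \<tau> \<bullet> \<nu> x = 0 \<longrightarrow>
        (\<Sum>i\<in>UNIV. \<Sum>j\<in>UNIV. (Dvec \<nu> i j x - (\<Sum>k\<in>UNIV. a i j k x y * (\<nu> x $ k))) * \<tau> $ i * \<tau> $ j) \<ge> \<delta>1"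
  shows "\<exists>h \<epsilon> \<delta>0. (\<exists>U. open U \<and> closure \<Omega> \<subseteq> U \<and> Ck 2 U h) \<and> \<epsilon> > 0 \<and> \<delta>0 > 0 \<and>
     (\<forall>x\<in>frontier \<Omega>. grad h x = \<nu> x) \<and> (\<forall>x\<in>strip \<Omega> \<epsilon>. h x < 0) \<and>
     (\<forall>x\<in>strip \<Omega> \<epsilon>. \<forall>y\<in>Y. \<forall>\<xi>::real^'n.
        (\<Sum>i\<in>UNIV. \<Sum>j\<in>UNIV. (D2 h i j x - (\<Sum>k\<in>UNIV. a i j k x y * (grad h x $ k))) * \<xi> $ i * \<xi> $ j) \<ge> \<delta>0 * (norm \<xi>)\<^sup>2)"
proof -
  obtain \<delta>1 where d1: "\<delta>1 > 0" and conv1: "\<And>x y \<tau>. x \<in> frontier \<Omega> \<Longrightarrow> y \<in> Y \<Longrightarrow> norm \<tau> = 1 \<Longrightarrow> \<tau> \<bullet> \<nu> x = 0 \<Longrightarrow>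
        (\<Sum>i\<in>UNIV. \<Sum>j\<in>UNIV. (Dvec \<nu> i j x - (\<Sum>k\<in>UNIV. a i j k x y * (\<nu> x $ k))) * \<tau> $ i * \<tau> $ j) \<ge> \<delta>1"
    using conv by blast
  have oO: "open \<Omega>" and bO: "bounded \<Omega>" and neO: "\<Omega> \<noteq> {}" using dom unfolding smooth_domain_normal_def by auto
  obtain \<rho> W where oW: "open W" and FW: "frontier \<Omega> \<subseteq> W" and sm: "smooth_on W \<rho>"
    and inW: "\<And>x. x \<in> W \<Longrightarrow> x \<in> \<Omega> \<longleftrightarrow> \<rho> x < 0"
    and gW: "\<And>x. x \<in> W \<Longrightarrow> grad \<rho> x \<noteq> 0 \<and> \<nu> x = (1 / norm (grad \<rho> x)) *\<^sub>R grad \<rho> x"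
    using dom unfolding smooth_domain_normal_def by metis
  define Fr where "Fr = frontier \<Omega>"
  have cFr: "compact Fr" unfolding Fr_def using bO compact_frontier_bounded by blast
  have clFr: "closed Fr" using cFr compact_imp_closed by blast
  have neFr: "Fr \<noteq> {}" unfolding Fr_def
    using frontier_not_empty neO bO not_bounded_UNIV by metis
  have FrcO: "Fr \<subseteq> closure \<Omega>" unfolding Fr_def frontier_def by auto
  have FrO: "Fr \<inter> \<Omega> = {}" unfolding Fr_def frontier_def using oO interior_open by auto
  have clO: "closure \<Omega> = \<Omega> \<union> Fr" unfolding Fr_def by (rule closure_Un_frontier)

  have rhoC: "Ck k W \<rho>" for k using sm unfolding smooth_on_def by blast
  have pdC: "Ck k W (dderiv \<rho> (axis i 1))" for k i
    using rhoC[of "Suc k"] by simp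
  define Sg where "Sg x = (\<Sum>i\<in>UNIV. dderiv \<rho> (axis i 1) x * dderiv \<rho> (axis i 1) x)" for x
  have SgC: "Ck k W Sg" for k
    unfolding Sg_def[abs_def] by (intro Ck_sum oW Ck_mult pdC) auto
  have ng: "norm (grad \<rho> x) = sqrt (Sg x)" for x unfolding Sg_def norm_grad_sqrt ..
  have Sg0: "Sg x \<ge> 0" for x unfolding Sg_def by (intro sum_nonneg) auto
  have Sgpos: "Sg x > 0" if "x \<in> W" for x
    using gW[OF that] ng[of x] Sg0[of x] by (metis norm_eq_zero order_le_less real_sqrt_zero)
  define R where "R x = pw 0 (Sg x)" for x
  have RC: "Ck 2 W R"
    unfolding R_def[abs_def]
    by (rule Ck_comp[where S="{0<..}"]) (use oW Sgpos SgC pw_deriv pw_cont in auto)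
  have Req: "R x = 1 / norm (grad \<rho> x)" if "x \<in> W" for x
    unfolding R_def ng using pw0 Sgpos[OF that] by simp
  have Rpos: "R x > 0" if "x \<in> W" for x
    using Req[OF that] gW[OF that] by simp
  define rt where "rt x = \<rho> x * R x" for x
  have rtC: "Ck 2 W rt" unfolding rt_def[abs_def] by (intro Ck_mult oW rhoC RC)
  have nucomp: "\<nu> x $ j = R x * dderiv \<rho> (axis j 1) x" if "x \<in> W" for x j
    using gW[OF that] Req[OF that] by (simp add: grad_nth)
  have nunorm: "norm (\<nu> x) = 1" if "x \<in> W" for x
    using gW[OF that] by simp
  have rho_diff: "\<rho> differentiable (at x)" if "x \<in> W" for x
    using Ck_diffat[OF rhoC[of "Suc 0"] oW that] by simp
  have R_diff: "R differentiable (at x)" if "x \<in> W" for x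
    using Ck_diffat[of 1 W R] RC oW that by (simp add: numeral_2_eq_2)
  have pd_diff: "dderiv \<rho> (axis i 1) differentiable (at x)" if "x \<in> W" for x i
    using Ck_diffat[OF pdC[of "Suc 0"] oW that] by simp
  have dR_diff: "dderiv R (axis i 1) differentiable (at x)" if "x \<in> W" for x i
  proof -
    have "Ck (Suc 0) W (dderiv R (axis i 1))" using RC by (simp add: numeral_2_eq_2)
    then show ?thesis using Ck_diffat oW that by blast
  qed
  have drt: "dderiv rt (axis j 1) x = \<nu> x $ j + \<rho> x * dderiv R (axis j 1) x" if "x \<in> W" for x j
    unfolding rt_def[abs_def] using dderiv_mult_at[OF rho_diff[OF that] R_diff[OF that]] nucomp[OF that]
    by (simp add: algebra_simps)
  have nu_diff: "(\<lambda>w. \<nu> w $ j) differentiable (at x)" if "x \<in> W" for x j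
    by (rule diff_cong_open[OF oW that, of "\<lambda>w. R w * dderiv \<rho> (axis j 1) w"])
       (use nucomp in simp, intro differentiable_mult R_diff pd_diff that)
  have D2rt: "dderiv (dderiv rt (axis j 1)) (axis i 1) x = Dvec \<nu> i j x + dderiv \<rho> (axis i 1) x * dderiv R (axis j 1) x"
    if "x \<in> W" "\<rho> x = 0" for x i j
  proof -
    have "dderiv (dderiv rt (axis j 1)) (axis i 1) x = dderiv (\<lambda>w. \<nu> w $ j + \<rho> w * dderiv R (axis j 1) w) (axis i 1) x"
      by (rule dderiv_cong[OF oW that(1)]) (use drt in simp)
    also have "\<dots> = dderiv (\<lambda>w. \<nu> w $ j) (axis i 1) x + dderiv (\<lambda>w. \<rho> w * dderiv R (axis j 1) w) (axis i 1) x"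
      by (rule dderiv_add_at) (use nu_diff that differentiable_mult rho_diff dR_diff in auto)
    also have "dderiv (\<lambda>w. \<rho> w * dderiv R (axis j 1) w) (axis i 1) x = dderiv \<rho> (axis i 1) x * dderiv R (axis j 1) x"
      using dderiv_mult_at[OF rho_diff[OF that(1)] dR_diff[OF that(1)]] that(2) by simp
    finally show ?thesis unfolding Dvec_def by simp
  qed

  have rho_cont: "continuous_on W \<rho>" using Ck_cont[OF rhoC[of 0]] .
  have Fr_rho: "z \<in> W \<and> \<rho> z = 0" if "z \<in> Fr" for z
  proof -
    have zW: "z \<in> W" using that FW Fr_def by auto
    have "z \<notin> \<Omega>" using that FrO by auto
    then have ge: "\<rho> z \<ge> 0" using inW[OF zW] by simp
    have "\<not> \<rho> z > 0"
    proof
      assume pos: "\<rho> z > 0"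
      define V where "V = W \<inter> \<rho> -` {0<..}"
      have "open V" unfolding V_def by (rule continuous_open_preimage[OF rho_cont oW]) simp
      moreover have "z \<in> V" using zW pos V_def by simp
      moreover have "z \<in> closure \<Omega>" using that FrcO by auto
      ultimately have "V \<inter> \<Omega> \<noteq> {}" using open_Int_closure_eq_empty by blast
      then obtain w where "w \<in> V" "w \<in> \<Omega>" by blast
      then show False using inW unfolding V_def by force
    qed
    then show ?thesis using ge zW by simp
  qed
  have Fr_rt: "rt z = 0" if "z \<in> Fr" for z using Fr_rho[OF that] rt_def by simp
  have rt_neg: "rt x < 0" if "x \<in> W" "x \<in> \<Omega>" for x
    using inW[OF that(1)] that(2) Rpos[OF that(1)] rt_def by (simp add: mult_neg_pos)

  obtain r where r0: "r > 0" and thick: "\<And>x. infdist x Fr < 2 * r \<Longrightarrow> x \<in> W"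
  proof (cases "- W = {}")
    case True
    then show ?thesis using that[of 1] by auto
  next
    case False
    have cW: "closed (- W)" using oW by (simp add: closed_Compl)
    have dis: "Fr \<inter> - W = {}" using FW Fr_def by auto
    have sd: "0 < setdist Fr (- W)" using setdist_gt_0_compact_closed[OF cFr cW] neFr False dis by simp
    show ?thesis
    proof (rule that[of "setdist Fr (- W) / 2"])
      show "0 < setdist Fr (- W) / 2" using sd by simp
      fix x assume x: "infdist x Fr < 2 * (setdist Fr (- W) / 2)"
      show "x \<in> W"
      proof (rule ccontr)
        assume "x \<notin> W"
        obtain z where z: "z \<in> Fr" "infdist x Fr = dist x z" using infdist_attains_inf[OF clFr neFr] by blast
        have "setdist Fr (- W) \<le> dist z x" using setdist_le_dist[OF z(1)] \<open>x \<notin> W\<close> by simp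
        then show False using x z by (simp add: dist_commute)
      qed
    qed
  qed
  have infd_cont: "continuous_on UNIV (\<lambda>x. infdist x Fr)" by (intro continuous_on_infdist continuous_intros)

  define A where "A = {x \<in> closure \<Omega>. r/2 \<le> infdist x Fr \<and> infdist x Fr \<le> r}"
  have cA: "compact A"
  proof -
    have "closed A" unfolding A_def
      by (intro closed_Collect_conj closed_Collect_le continuous_intros continuous_on_infdist closed_Int) auto
    moreover have "A \<subseteq> closure \<Omega>" unfolding A_def by auto
    then have "bounded A" using bounded_closure[OF bO] bounded_subset by blast
    ultimately show ?thesis using compact_eq_bounded_closed by blast
  qed
  have AW: "A \<subseteq> W" unfolding A_def using thick r0 by force
  have AO: "A \<subseteq> \<Omega>"
  proof
    fix x assume x: "x \<in> A"
    then have "x \<notin> Fr" using infdist_zero[of x Fr] r0 unfolding A_def by force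
    then show "x \<in> \<Omega>" using x clO unfolding A_def by auto
  qed
  obtain m where m0: "m > 0" and mA: "\<And>x. x \<in> A \<Longrightarrow> rt x \<le> - m"
  proof (cases "A = {}")
    case True then show ?thesis using that[of 1] by auto
  next
    case False
    have "continuous_on A rt" using Ck_cont[OF rtC] AW continuous_on_subset by blast
    then obtain x0 where x0: "x0 \<in> A" "\<And>y. y \<in> A \<Longrightarrow> rt y \<le> rt x0"
      using continuous_attains_sup[OF cA False] by blast
    have "rt x0 < 0" using rt_neg x0(1) AW AO by auto
    then show ?thesis using that[of "- rt x0"] x0 by auto
  qed

  define Bm where "Bm z y i j = dderiv (dderiv rt (axis j 1)) (axis i 1) z - (\<Sum>k\<in>UNIV. a i j k z y * \<nu> z $ k)" for z y i j
  have nu_cont: "continuous_on W (\<lambda>z. \<nu> z $ k)" for k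
  proof -
    have "continuous_on W (\<lambda>z. R z * dderiv \<rho> (axis k 1) z)"
      using Ck_cont[OF RC] Ck_cont[OF pdC[of 0]] by (intro continuous_on_mult) auto
    then show ?thesis using nucomp continuous_on_cong by (metis (no_types, lifting))
  qed
  have D2rt_cont: "continuous_on W (dderiv (dderiv rt (axis j 1)) (axis i 1))" for i j
    using rtC by (simp add: numeral_2_eq_2)
  have cFY: "compact (Fr \<times> closure Y)" using cFr Yb compact_closure compact_Times by blast
  have FY: "Fr \<times> closure Y \<subseteq> closure \<Omega> \<times> closure Y" using FrcO by auto
  have Bcont: "continuous_on (Fr \<times> closure Y) (\<lambda>p. \<Sum>i\<in>UNIV. \<Sum>j\<in>UNIV. \<bar>Bm (fst p) (snd p) i j\<bar>)"
  proof -
    have c1: "continuous_on (Fr \<times> closure Y) (\<lambda>p. dderiv (dderiv rt (axis j 1)) (axis i 1) (fst p))" for i j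
      by (rule continuous_on_compose2[OF D2rt_cont]) (use FW Fr_def in \<open>auto intro: continuous_intros\<close>)
    have c2: "continuous_on (Fr \<times> closure Y) (\<lambda>p. \<nu> (fst p) $ k)" for k
      by (rule continuous_on_compose2[OF nu_cont]) (use FW Fr_def in \<open>auto intro: continuous_intros\<close>)
    have c3: "continuous_on (Fr \<times> closure Y) (\<lambda>p. a i j k (fst p) (snd p))" for i j k
      using continuous_on_subset[OF acont FY] .
    show ?thesis unfolding Bm_def by (intro continuous_intros c1 c2 c3)
  qed
  obtain M where MB: "\<And>z y i j. z \<in> Fr \<Longrightarrow> y \<in> Y \<Longrightarrow> \<bar>Bm z y i j\<bar> \<le> M"
  proof -
    have "compact ((\<lambda>p. \<Sum>i\<in>UNIV. \<Sum>j\<in>UNIV. \<bar>Bm (fst p) (snd p) i j\<bar>) ` (Fr \<times> closure Y))"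
      by (rule compact_continuous_image[OF Bcont cFY])
    then have "bounded ((\<lambda>p. \<Sum>i\<in>UNIV. \<Sum>j\<in>UNIV. \<bar>Bm (fst p) (snd p) i j\<bar>) ` (Fr \<times> closure Y))"
      by (rule compact_imp_bounded)
    then obtain M where M0: "\<And>q. q \<in> (\<lambda>p. \<Sum>i\<in>UNIV. \<Sum>j\<in>UNIV. \<bar>Bm (fst p) (snd p) i j\<bar>) ` (Fr \<times> closure Y) \<Longrightarrow> norm q \<le> M"
      unfolding bounded_iff by blast
    have M: "norm (\<Sum>i\<in>UNIV. \<Sum>j\<in>UNIV. \<bar>Bm (fst p) (snd p) i j\<bar>) \<le> M" if "p \<in> Fr \<times> closure Y" for p
      by (rule M0) (use that in blast)
    show ?thesis
    proof (rule that[of M])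
      fix z y i j assume zy: "z \<in> Fr" "y \<in> Y"
      have "\<bar>Bm z y i j\<bar> \<le> (\<Sum>j\<in>UNIV. \<bar>Bm z y i j\<bar>)"
        by (rule member_le_sum) auto
      also have "\<dots> \<le> (\<Sum>i\<in>UNIV. \<Sum>j\<in>UNIV. \<bar>Bm z y i j\<bar>)"
        by (rule member_le_sum[of i UNIV "\<lambda>i. \<Sum>j\<in>UNIV. \<bar>Bm z y i j\<bar>"]) (auto intro: sum_nonneg)
      also have "\<dots> \<le> M" using M[of "(z, y)"] zy closure_subset by force
      finally show "\<bar>Bm z y i j\<bar> \<le> M" .
    qed
  qed
  define L where "L = M * real (CARD('n))^2"
  define Q where "Q = \<delta>1 + L + 2 * L^2 / \<delta>1"
  define Mx where "Mx = max (1/m) (Q/2)"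
  define K where "K = Mx + 1"
  have mx: "1/m \<le> Mx" "Q/2 \<le> Mx" unfolding Mx_def by simp_all
  have m1: "1/m > 0" using m0 by simp
  have K0: "K > 0" unfolding K_def using mx m1 by linarith
  have Km: "1/K \<le> m"
  proof -
    have "1/m < K" unfolding K_def using mx by linarith
    then show ?thesis using m0 K0 by (simp add: field_simps)
  qed
  have "Q \<le> 2 * Mx" using mx(2) by (simp add: field_simps)
  then have KL: "2 * K \<ge> \<delta>1 + L + 2 * L^2 / \<delta>1" unfolding Q_def[symmetric] K_def by simp

  define g where "g x = phiK K 0 (rt x)" for x
  have phid: "(phiK K (0 + j) has_real_derivative phiK K (Suc (0 + j)) t) (at t)" if "j < 2" for j t
  proof -
    have "j = 0 \<or> j = 1" using that by linarith
    then show ?thesis using phiK_deriv0[of K t] phiK_deriv1[of K t] by (auto simp: numeral_2_eq_2)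
  qed
  have gC: "Ck 2 W g" unfolding g_def[abs_def]
    by (rule Ck_comp[where S=UNIV and \<phi>="phiK K" and m=0 and f=rt]) (use oW rtC phid phiK_cont2 in \<open>auto simp: numeral_2_eq_2\<close>)
  define h where "h x = (if x \<in> W \<and> infdist x Fr < r then g x else - 1/(3*K))" for x
  define W1 where "W1 = W \<inter> {x. infdist x Fr < r}"
  define W2 where "W2 = \<Omega> \<inter> {x. r/2 < infdist x Fr}"
  have oW1: "open W1" unfolding W1_def by (intro open_Int oW open_Collect_less continuous_intros infd_cont)
  have oW2: "open W2" unfolding W2_def by (intro open_Int oO open_Collect_less continuous_intros infd_cont)
  have hW1: "h x = g x" if "x \<in> W1" for x using that unfolding h_def W1_def by auto
  have hW2: "h x = - 1/(3*K)" if "x \<in> W2" for x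
  proof (cases "x \<in> W \<and> infdist x Fr < r")
    case True
    then have "x \<in> A" using that clO unfolding A_def W2_def by auto
    then have "rt x \<le> - (1/K)" using mA[of x] Km by linarith
    then show ?thesis using True phiK_const[OF K0, of "rt x"] unfolding h_def g_def by simp
  next
    case False then show ?thesis unfolding h_def by auto
  qed
  have hC1: "Ck 2 W1 h"
    by (rule Ck_cong[OF oW1 _ Ck_subset[OF oW1 _ gC]]) (use hW1 W1_def in auto)
  have hC2: "Ck 2 W2 h"
    by (rule Ck_cong[OF oW2 _ Ck_const[of 2 W2 "- 1/(3*K)"]]) (use hW2 in auto)
  define U' where "U' = W1 \<union> W2"
  have oU': "open U'" unfolding U'_def using oW1 oW2 by auto
  have hC: "Ck 2 U' h" unfolding U'_def by (rule Ck_Un[OF oW1 oW2 hC1 hC2])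
  have clU': "closure \<Omega> \<subseteq> U'"
  proof
    fix x assume x: "x \<in> closure \<Omega>"
    show "x \<in> U'"
    proof (cases "infdist x Fr < r")
      case True
      then have "x \<in> W" using thick r0 by force
      then show ?thesis using True unfolding U'_def W1_def by auto
    next
      case False
      then have "x \<notin> Fr" using infdist_zero[of x Fr] r0 by force
      then have "x \<in> \<Omega>" using x clO by auto
      then show ?thesis using False r0 unfolding U'_def W2_def by auto
    qed
  qed

  have rt_diff: "rt differentiable (at x)" if "x \<in> W" for x
    using Ck_diffat[of 1 W rt] rtC oW that by (simp add: numeral_2_eq_2)
  have drt_diff: "dderiv rt (axis j 1) differentiable (at x)" if "x \<in> W" for x j
  proof -
    have "Ck (Suc 0) W (dderiv rt (axis j 1))" using rtC by (simp add: numeral_2_eq_2)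
    then show ?thesis using Ck_diffat oW that by blast
  qed
  have phi1_diff: "phiK K 1 differentiable (at t)" for t
    using phiK_deriv1[of K t] unfolding has_field_derivative_def differentiable_def by blast
  have dg: "dderiv g v x = phiK K 1 (rt x) * dderiv rt v x" if "x \<in> W" for x v
    unfolding g_def[abs_def] by (rule dderiv_comp_at[OF phiK_deriv0 rt_diff[OF that]])
  have dh: "dderiv h v x = dderiv g v x" if "x \<in> W1" for x v
    by (rule dderiv_cong[OF oW1 that]) (use hW1 in auto)
  have FrW1: "z \<in> W1" if "z \<in> Fr" for z
    using Fr_rho[OF that] infdist_zero[OF that] r0 unfolding W1_def by auto
  have pv: "phiK K 1 0 = 1" "phiK K 2 0 = 2 * K" using phiK_vals[OF K0] by auto
  have drtFr: "dderiv rt (axis j 1) z = \<nu> z $ j" if "z \<in> Fr" for z j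
    using drt[of z j] Fr_rho[OF that] by simp
  have gradFr: "grad h z = \<nu> z" if "z \<in> Fr" for z
  proof -
    have "grad h z $ j = \<nu> z $ j" for j
      unfolding grad_nth using dh[OF FrW1[OF that]] dg[of z] Fr_rho[OF that] Fr_rt[OF that] pv drtFr[OF that]
      by simp
    then show ?thesis by (simp add: vec_eq_iff)
  qed
  have D2Fr: "D2 h i j z = dderiv (dderiv rt (axis j 1)) (axis i 1) z + 2 * K * (\<nu> z $ i * \<nu> z $ j)"
    if "z \<in> Fr" for z i j
  proof -
    have zW: "z \<in> W" and rz: "\<rho> z = 0" using Fr_rho[OF that] by auto
    have "D2 h i j z = dderiv (dderiv g (axis j 1)) (axis i 1) z"
      unfolding D2_def by (rule dderiv_cong[OF oW1 FrW1[OF that]]) (use dh in auto)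
    also have "\<dots> = dderiv (\<lambda>w. phiK K 1 (rt w) * dderiv rt (axis j 1) w) (axis i 1) z"
      by (rule dderiv_cong[OF oW zW]) (use dg in auto)
    also have "\<dots> = phiK K 1 (rt z) * dderiv (dderiv rt (axis j 1)) (axis i 1) z
        + dderiv (\<lambda>w. phiK K 1 (rt w)) (axis i 1) z * dderiv rt (axis j 1) z"
    proof (rule dderiv_mult_at)
      show "(\<lambda>w. phiK K 1 (rt w)) differentiable (at z)"
        using differentiable_chain_at[OF rt_diff[OF zW] phi1_diff] by (simp add: o_def)
      show "dderiv rt (axis j 1) differentiable (at z)" by (rule drt_diff[OF zW])
    qed
    also have "dderiv (\<lambda>w. phiK K 1 (rt w)) (axis i 1) z = phiK K 2 (rt z) * dderiv rt (axis i 1) z"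
      by (rule dderiv_comp_at[OF phiK_deriv1 rt_diff[OF zW]])
    finally show ?thesis using Fr_rt[OF that] pv drtFr[OF that] by (simp add: algebra_simps)
  qed
  define Hm where "Hm x y i j = D2 h i j x - (\<Sum>k\<in>UNIV. a i j k x y * (grad h x $ k))" for x y i j
  have bdry: "bil (Hm z y) \<xi> \<xi> \<ge> \<delta>1 / 2" if zF: "z \<in> Fr" and yY: "y \<in> Y" and xn: "norm \<xi> = 1" for z y \<xi>
  proof -
    have zW: "z \<in> W" and rz: "\<rho> z = 0" using Fr_rho[OF zF] by auto
    have "Hm z y = (\<lambda>i j. Bm z y i j + 2 * K * (\<nu> z $ i * \<nu> z $ j))"
      unfolding Hm_def Bm_def using D2Fr[OF zF] gradFr[OF zF] by (auto simp: fun_eq_iff)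
    then have eq: "bil (Hm z y) \<xi> \<xi> = bil (Bm z y) \<xi> \<xi> + 2 * K * (\<nu> z \<bullet> \<xi>)^2"
      by (simp add: bil_plus bil_cmul bil_rank1)
    have tang: "bil (Bm z y) t t \<ge> \<delta>1" if t: "norm t = 1" "t \<bullet> \<nu> z = 0" for t
    proof -
      have "Bm z y = (\<lambda>i j. (Dvec \<nu> i j z - (\<Sum>k\<in>UNIV. a i j k z y * (\<nu> z $ k)))
          + dderiv \<rho> (axis i 1) z * dderiv R (axis j 1) z)"
        unfolding Bm_def using D2rt[OF zW rz] by (auto simp: fun_eq_iff)
      then have "bil (Bm z y) t t = bil (\<lambda>i j. Dvec \<nu> i j z - (\<Sum>k\<in>UNIV. a i j k z y * (\<nu> z $ k))) t t
          + (\<Sum>i\<in>UNIV. dderiv \<rho> (axis i 1) z * t$i) * (\<Sum>j\<in>UNIV. dderiv R (axis j 1) z * t$j)"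
        by (simp add: bil_plus bil_prod)
      moreover have "(\<Sum>i\<in>UNIV. dderiv \<rho> (axis i 1) z * t$i) = 0"
      proof -
        have "(\<Sum>i\<in>UNIV. dderiv \<rho> (axis i 1) z * t$i) = (\<Sum>i\<in>UNIV. (1 / R z) * (\<nu> z $ i * t$i))"
          using nucomp[OF zW] Rpos[OF zW] by (intro sum.cong refl) (simp add: field_simps)
        also have "\<dots> = (1 / R z) * (\<nu> z \<bullet> t)" by (simp add: inner_vec_sum sum_distrib_left)
        finally show ?thesis using t(2) by (simp add: inner_commute)
      qed
      moreover have "bil (\<lambda>i j. Dvec \<nu> i j z - (\<Sum>k\<in>UNIV. a i j k z y * (\<nu> z $ k))) t t \<ge> \<delta>1"
        using conv1[OF zF[unfolded Fr_def] yY t] unfolding bil_def .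
      ultimately show ?thesis by simp
    qed
    have "bil (Bm z y) \<xi> \<xi> + 2 * K * (\<nu> z \<bullet> \<xi>)^2 \<ge> \<delta>1 / 2"
      by (rule quad_pos[OF nunorm[OF zW] MB[OF zF yY] d1 tang]) (use KL L_def xn in auto)
    then show ?thesis using eq by simp
  qed

  define E where "E = (closure \<Omega> \<times> closure Y) \<times> sphere (0::real^'n) 1"
  define Fq where "Fq p = bil (Hm (fst (fst p)) (snd (fst p))) (snd p) (snd p)" for p :: "((real^'n) \<times> (real^'n)) \<times> (real^'n)"
  have cE: "compact E" unfolding E_def
    by (intro compact_Times compact_sphere) (use bO Yb compact_closure in auto)
  have hD: "continuous_on U' (dderiv (dderiv h (axis j 1)) (axis i 1))" "continuous_on U' (dderiv h (axis j 1))" for i j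
    using hC by (simp_all add: numeral_2_eq_2)
  have FqC: "continuous_on E Fq"
  proof -
    have EU: "fst (fst p) \<in> U'" if "p \<in> E" for p using that clU' unfolding E_def by auto
    have cf: "continuous_on E (\<lambda>p. fst (fst p))" by (intro continuous_on_fst continuous_on_id)
    have c1: "continuous_on E (\<lambda>p. D2 h i j (fst (fst p)))" for i j
      unfolding D2_def by (rule continuous_on_compose2[OF hD(1) cf]) (use EU in auto)
    have c2: "continuous_on E (\<lambda>p. grad h (fst (fst p)) $ k)" for k
      unfolding grad_nth by (rule continuous_on_compose2[OF hD(2) cf]) (use EU in auto)
    have c3: "continuous_on E (\<lambda>p. a i j k (fst (fst p)) (snd (fst p)))" for i j k
    proof -
      have "continuous_on E (\<lambda>p. (\<lambda>q. a i j k (fst q) (snd q)) (fst p))"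
        by (rule continuous_on_compose2[OF acont]) (auto simp: E_def intro: continuous_intros)
      then show ?thesis by simp
    qed
    have c4: "continuous_on E (\<lambda>p. snd p $ i)" for i by (intro continuous_intros)
    show ?thesis unfolding Fq_def bil_def Hm_def
      by (intro continuous_on_sum continuous_on_mult continuous_on_diff c1 c2 c3 c4)
  qed
  have d14: "\<delta>1 / 4 > 0" using d1 by simp
  have "\<exists>d>0. \<forall>p\<in>E. \<forall>p'\<in>E. dist p' p < d \<longrightarrow> dist (Fq p') (Fq p) < \<delta>1 / 4"
    using compact_uniformly_continuous[OF FqC cE] d14 unfolding uniformly_continuous_on_def by blast
  then obtain d where d0: "d > 0" and dU: "\<And>p p'. p \<in> E \<Longrightarrow> p' \<in> E \<Longrightarrow> dist p' p < d \<Longrightarrow> dist (Fq p') (Fq p) < \<delta>1 / 4"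
    by blast
  define \<epsilon> where "\<epsilon> = min r d"
  have e0: "\<epsilon> > 0" unfolding \<epsilon>_def using r0 d0 by simp
  have strip_W1: "x \<in> W1" if "x \<in> strip \<Omega> \<epsilon>" for x
  proof -
    have "infdist x Fr < r" using that unfolding strip_def \<epsilon>_def Fr_def by auto
    moreover then have "x \<in> W" using thick r0 by force
    ultimately show ?thesis unfolding W1_def by simp
  qed
  have hneg: "h x < 0" if "x \<in> strip \<Omega> \<epsilon>" for x
  proof -
    have xW: "x \<in> W" and xO: "x \<in> \<Omega>" using strip_W1[OF that] that unfolding W1_def strip_def by auto
    show ?thesis using hW1[OF strip_W1[OF that]] phiK_neg[OF K0 rt_neg[OF xW xO]] unfolding g_def by simp
  qed
  have hpos: "bil (Hm x y) \<xi> \<xi> \<ge> \<delta>1 / 4 * (norm \<xi>)\<^sup>2" if x: "x \<in> strip \<Omega> \<epsilon>" and y: "y \<in> Y" for x y \<xi>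
  proof (cases "\<xi> = 0")
    case True then show ?thesis by (simp add: bil_zero)
  next
    case False
    define \<eta> where "\<eta> = (1 / norm \<xi>) *\<^sub>R \<xi>"
    have eta1: "norm \<eta> = 1" unfolding \<eta>_def using False by simp
    have xi_eq: "\<xi> = norm \<xi> *\<^sub>R \<eta>" unfolding \<eta>_def using False by simp
    have xO: "x \<in> \<Omega>" and xd: "infdist x Fr < \<epsilon>" using x unfolding strip_def Fr_def by auto
    obtain z where zF: "z \<in> Fr" and dz: "infdist x Fr = dist x z" using infdist_attains_inf[OF clFr neFr] by blast
    have p1: "((x, y), \<eta>) \<in> E" unfolding E_def using xO y eta1 closure_subset by auto
    have p2: "((z, y), \<eta>) \<in> E" unfolding E_def using zF FrcO y eta1 closure_subset by auto
    have "dist ((x, y), \<eta>) ((z, y), \<eta>) = dist x z" by (simp add: dist_Pair_Pair)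
    also have "\<dots> < d" using xd dz unfolding \<epsilon>_def by simp
    finally have "dist (Fq ((x, y), \<eta>)) (Fq ((z, y), \<eta>)) < \<delta>1 / 4" using dU[OF p2 p1] by simp
    moreover have "Fq ((z, y), \<eta>) \<ge> \<delta>1 / 2" unfolding Fq_def using bdry[OF zF y eta1] by simp
    ultimately have "Fq ((x, y), \<eta>) \<ge> \<delta>1 / 4" unfolding dist_real_def by linarith
    then have b4: "\<delta>1 / 4 \<le> bil (Hm x y) \<eta> \<eta>" unfolding Fq_def by simp
    have eq: "bil (Hm x y) \<xi> \<xi> = (norm \<xi>)\<^sup>2 * bil (Hm x y) \<eta> \<eta>"
      by (subst (1 2) xi_eq) (simp add: bil_scale1 bil_scale2 power2_eq_square)
    have "\<delta>1 / 4 * (norm \<xi>)\<^sup>2 \<le> bil (Hm x y) \<eta> \<eta> * (norm \<xi>)\<^sup>2"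
      by (rule mult_right_mono[OF b4 zero_le_power2])
    then show ?thesis unfolding eq by (metis mult.commute)
  qed
  show ?thesis
  proof (rule exI[of _ h], rule exI[of _ \<epsilon>], rule exI[of _ "\<delta>1 / 4"], intro conjI)
    show "\<exists>U. open U \<and> closure \<Omega> \<subseteq> U \<and> Ck 2 U h" using oU' clU' hC by blast
    show "\<epsilon> > 0" by (rule e0)
    show "\<delta>1 / 4 > 0" by (rule d14)
    show "\<forall>x\<in>frontier \<Omega>. grad h x = \<nu> x" using gradFr Fr_def by blast
    show "\<forall>x\<in>strip \<Omega> \<epsilon>. h x < 0" using hneg by blast
    show "\<forall>x\<in>strip \<Omega> \<epsilon>. \<forall>y\<in>Y. \<forall>\<xi>::real^'n.
        (\<Sum>i\<in>UNIV. \<Sum>j\<in>UNIV. (D2 h i j x - (\<Sum>k\<in>UNIV. a i j k x y * (grad h x $ k))) * \<xi> $ i * \<xi> $ j) \<ge> \<delta>1 / 4 * (norm \<xi>)\<^sup>2"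
      using hpos unfolding bil_def Hm_def by blast
  qed
qed



lemma matrix_inv_right': "invertible A \<Longrightarrow> A ** matrix_inv A = mat 1"
  unfolding matrix_inv_def invertible_def by (rule someI_ex[THEN conjunct1])

lemma sum_ind:
  fixes j :: "'n::finite"
  shows "(\<Sum>ja\<in>UNIV. (if ja = j then 1 else 0) * (f ja::real)) = f j"
proof -
  have "(\<Sum>ja\<in>UNIV. (if ja = j then 1 else 0) * (f ja::real)) = (\<Sum>ja\<in>UNIV. if ja = j then f ja else 0)"
    by (intro sum.cong) auto
  then show ?thesis by simp
qed

lemma matrix_inv_entry:
  fixes A :: "real^'n^'n"
  assumes "det A \<noteq> 0"
  shows "matrix_inv A $ i $ j = det (\<chi> r s. if s = i then axis j 1 $ r else A$r$s) / det A"
proof -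
  have inv: "invertible A" using assms invertible_det_nz by blast
  define x where "x = matrix_inv A *v axis j 1"
  have "A *v x = axis j 1"
    unfolding x_def matrix_vector_mul_assoc matrix_inv_right'[OF inv] by simp
  then have "x = (\<chi> k. det (\<chi> r s. if s = k then axis j 1 $ r else A$r$s) / det A)"
    using cramer[OF assms] by blast
  then have "x $ i = det (\<chi> r s. if s = i then axis j 1 $ r else A$r$s) / det A" by simp
  moreover have "x $ i = matrix_inv A $ i $ j"
    unfolding x_def matrix_vector_mult_def axis_def by (simp add: vec_lambda_beta mult.commute[of _ "if _ then _ else _"] sum_ind)
  ultimately show ?thesis by simp
qed

lemma continuous_on_det:
  fixes M :: "'a::topological_space \<Rightarrow> real^'n^'n"
  assumes "\<And>i j. continuous_on S (\<lambda>p. M p $ i $ j)"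
  shows "continuous_on S (\<lambda>p. det (M p))"
  unfolding det_def
  by (intro continuous_on_sum continuous_on_mult continuous_on_const continuous_on_prod assms)

lemma Ck_ddn: "Ck n U f \<Longrightarrow> n = Suc k \<Longrightarrow> b \<in> Basis \<Longrightarrow> Ck k U (dderiv f b)" by simp

lemma basis_x: "(axis i (1::real), 0::real^'n) \<in> Basis" by (simp add: Basis_prod_def)
lemma basis_y: "(0::real^'n, axis i (1::real)) \<in> Basis" by (simp add: Basis_prod_def)

lemma sum_swap_lk: "(\<Sum>l\<in>UNIV. \<Sum>k\<in>UNIV. f l k * g l * (v k::real)) = (\<Sum>k\<in>UNIV. (\<Sum>l\<in>UNIV. f l k * g l) * v k)"
  by (simp only: sum_distrib_right) (rule sum.swap)

lemma sum_kl: "(\<Sum>k\<in>UNIV. \<Sum>l\<in>UNIV. f k l * g l * (v k::real)) = (\<Sum>k\<in>UNIV. (\<Sum>l\<in>UNIV. f k l * g l) * v k)"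
  by (simp add: sum_distrib_right)

lemma cont_coeffs:
  fixes c :: "(real^'n) \<times> (real^'n) \<Rightarrow> real"
  assumes U: "open U" "S \<subseteq> U" "Ck 4 U c"
    and nd: "\<And>p. p \<in> S \<Longrightarrow> det (cmix c (fst p) (snd p)) \<noteq> 0"
  shows "continuous_on S (\<lambda>p. cinv c (fst p) (snd p) l k)"
    and "continuous_on S (\<lambda>p. cXXY c i j l (fst p) (snd p))"
    and "continuous_on S (\<lambda>p. cXYY c l i j (fst p) (snd p))"
proof -
  have c3: "continuous_on S (dderiv (dderiv (dderiv c b1) b2) b3)" if "b1 \<in> Basis" "b2 \<in> Basis" "b3 \<in> Basis" for b1 b2 b3
  proof -
    have "Ck 3 U (dderiv c b1)" by (rule Ck_ddn[OF U(3) _ that(1)]) simp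
    then have "Ck 2 U (dderiv (dderiv c b1) b2)" by (rule Ck_ddn[OF _ _ that(2)]) simp
    then have "Ck 1 U (dderiv (dderiv (dderiv c b1) b2) b3)" by (rule Ck_ddn[OF _ _ that(3)]) simp
    then show ?thesis using Ck_cont continuous_on_subset U(2) by blast
  qed
  have c2: "continuous_on S (dderiv (dderiv c b1) b2)" if "b1 \<in> Basis" "b2 \<in> Basis" for b1 b2
  proof -
    have "Ck 3 U (dderiv c b1)" by (rule Ck_ddn[OF U(3) _ that(1)]) simp
    then have "Ck 2 U (dderiv (dderiv c b1) b2)" by (rule Ck_ddn[OF _ _ that(2)]) simp
    then show ?thesis using Ck_cont continuous_on_subset U(2) by blast
  qed
  show "continuous_on S (\<lambda>p. cXXY c i j l (fst p) (snd p))"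
    unfolding cXXY_def cX_def cY_def using c3[OF basis_y basis_x basis_x] by simp
  show "continuous_on S (\<lambda>p. cXYY c l i j (fst p) (snd p))"
    unfolding cXYY_def cX_def cY_def using c3[OF basis_y basis_y basis_x] by simp
  have cm: "continuous_on S (\<lambda>p. cmix c (fst p) (snd p) $ r $ s)" for r s
    unfolding cmix_def cX_def cY_def using c2[OF basis_x basis_y] by simp
  have cd: "continuous_on S (\<lambda>p. det (cmix c (fst p) (snd p)))"
    by (rule continuous_on_det[OF cm])
  have cn: "continuous_on S (\<lambda>p. det (\<chi> r s. if s = l then axis k 1 $ r else cmix c (fst p) (snd p) $ r $ s))"
  proof (rule continuous_on_det)
    fix r s
    show "continuous_on S (\<lambda>p. (\<chi> r s. if s = l then axis k 1 $ r else cmix c (fst p) (snd p) $ r $ s) $ r $ s)"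
      by (cases "s = l") (simp_all add: cm)
  qed
  have "continuous_on S (\<lambda>p. det (\<chi> r s. if s = l then axis k 1 $ r else cmix c (fst p) (snd p) $ r $ s) / det (cmix c (fst p) (snd p)))"
    by (rule continuous_on_divide[OF cn cd]) (use nd in auto)
  then show "continuous_on S (\<lambda>p. cinv c (fst p) (snd p) l k)"
    unfolding cinv_def by (rule continuous_on_eq) (simp add: matrix_inv_entry nd)
qed




lemma cont_swap:
  assumes "continuous_on (A \<times> B) (\<lambda>p. g (fst p) (snd p))"
  shows "continuous_on (B \<times> A) (\<lambda>p. g (snd p) (fst p))"
proof -
  have "continuous_on (B \<times> A) (\<lambda>p. (\<lambda>q. g (fst q) (snd q)) (snd p, fst p))"
    by (rule continuous_on_compose2[OF assms]) (auto intro!: continuous_on_Pair continuous_on_fst continuous_on_snd continuous_on_id)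
  then show ?thesis by simp
qed

theorem theoremA1:
  fixes \<Omega> \<Omega>s :: "(real^'n) set"
    and \<nu> \<nu>s :: "real^'n \<Rightarrow> real^'n"
    and c :: "(real^'n) \<times> (real^'n) \<Rightarrow> real"
  assumes dom: "smooth_domain_normal \<Omega> \<nu>"
    and doms: "smooth_domain_normal \<Omega>s \<nu>s"
    and creg: "\<exists>\<alpha>. 0 < \<alpha> \<and> \<alpha> \<le> 1 \<and> Ck_alpha 4 \<alpha> (closure \<Omega> \<times> closure \<Omega>s) c"
    and twist1: "\<forall>x\<in>closure \<Omega>. inj_on (gradX c x) (closure \<Omega>s)"
    and twist2: "\<forall>y\<in>closure \<Omega>s. inj_on (\<lambda>x. gradY c x y) (closure \<Omega>)"
    and nondeg: "\<forall>x\<in>closure \<Omega>. \<forall>y\<in>closure \<Omega>s. det (cmix c x y) \<noteq> 0"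
    and cconv: "unif_c_convex c \<Omega> \<nu> \<Omega>s"
    and csconv: "unif_cstar_convex c \<Omega>s \<nu>s \<Omega>"
  shows "\<exists>h hs \<epsilon> \<epsilon>s \<delta>0 \<delta>0s.
     (\<exists>U. open U \<and> closure \<Omega> \<subseteq> U \<and> Ck 2 U h) \<and>
     (\<exists>U. open U \<and> closure \<Omega>s \<subseteq> U \<and> Ck 2 U hs) \<and>
     \<epsilon> > 0 \<and> \<epsilon>s > 0 \<and> \<delta>0 > 0 \<and> \<delta>0s > 0 \<and>
     (\<forall>x\<in>frontier \<Omega>. grad h x = \<nu> x) \<and>
     (\<forall>x\<in>strip \<Omega> \<epsilon>. h x < 0) \<and>
     (\<forall>x\<in>strip \<Omega> \<epsilon>. \<forall>y\<in>\<Omega>s. \<forall>\<xi>::real^'n.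
        (\<Sum>i\<in>UNIV. \<Sum>j\<in>UNIV. (D2 h i j x
            - (\<Sum>l\<in>UNIV. \<Sum>k\<in>UNIV. cinv c x y l k * cXXY c i j l x y * (grad h x $ k)))
          * \<xi> $ i * \<xi> $ j) \<ge> \<delta>0 * (norm \<xi>)\<^sup>2) \<and>
     (\<forall>y\<in>frontier \<Omega>s. grad hs y = \<nu>s y) \<and>
     (\<forall>y\<in>strip \<Omega>s \<epsilon>s. hs y < 0) \<and>
     (\<forall>y\<in>strip \<Omega>s \<epsilon>s. \<forall>x\<in>\<Omega>. \<forall>\<xi>::real^'n.
        (\<Sum>i\<in>UNIV. \<Sum>j\<in>UNIV. (D2 hs i j y
            - (\<Sum>k\<in>UNIV. \<Sum>l\<in>UNIV. cinv c x y k l * cXYY c l i j x y * (grad hs y $ k)))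
          * \<xi> $ i * \<xi> $ j) \<ge> \<delta>0s * (norm \<xi>)\<^sup>2)"
proof -
  obtain U where oU: "open U" and sU: "closure \<Omega> \<times> closure \<Omega>s \<subseteq> U" and cU: "Ck 4 U c"
    using creg unfolding Ck_alpha_def by blast
  have nd: "det (cmix c (fst p) (snd p)) \<noteq> 0" if "p \<in> closure \<Omega> \<times> closure \<Omega>s" for p
    using nondeg that by (cases p) auto
  note cc = cont_coeffs[OF oU sU cU nd]
  have bO: "bounded \<Omega>" and bOs: "bounded \<Omega>s"
    using dom doms unfolding smooth_domain_normal_def by auto
  define a1 where "a1 i j k x y = (\<Sum>l\<in>UNIV. cinv c x y l k * cXXY c i j l x y)" for i j k x y
  define a2 where "a2 i j k y x = (\<Sum>l\<in>UNIV. cinv c x y k l * cXYY c l i j x y)" for i j k y x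
  have ac1: "continuous_on (closure \<Omega> \<times> closure \<Omega>s) (\<lambda>p. a1 i j k (fst p) (snd p))" for i j k
    unfolding a1_def by (intro continuous_on_sum continuous_on_mult cc)
  have ac2: "continuous_on (closure \<Omega>s \<times> closure \<Omega>) (\<lambda>p. a2 i j k (fst p) (snd p))" for i j k
  proof -
    have "continuous_on (closure \<Omega> \<times> closure \<Omega>s) (\<lambda>p. a2 i j k (snd p) (fst p))"
      unfolding a2_def by (intro continuous_on_sum continuous_on_mult cc)
    from cont_swap[OF this] show ?thesis by simp
  qed
  have conv1: "\<exists>\<delta>1>0. \<forall>x\<in>frontier \<Omega>. \<forall>y\<in>\<Omega>s. \<forall>\<tau>. norm \<tau> = 1 \<and> \<tau> \<bullet> \<nu> x = 0 \<longrightarrow>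
        (\<Sum>i\<in>UNIV. \<Sum>j\<in>UNIV. (Dvec \<nu> i j x - (\<Sum>k\<in>UNIV. a1 i j k x y * (\<nu> x $ k))) * \<tau> $ i * \<tau> $ j) \<ge> \<delta>1"
    using cconv unfolding unif_c_convex_def a1_def sum_swap_lk by blast
  have conv2: "\<exists>\<delta>1>0. \<forall>x\<in>frontier \<Omega>s. \<forall>y\<in>\<Omega>. \<forall>\<tau>. norm \<tau> = 1 \<and> \<tau> \<bullet> \<nu>s x = 0 \<longrightarrow>
        (\<Sum>i\<in>UNIV. \<Sum>j\<in>UNIV. (Dvec \<nu>s i j x - (\<Sum>k\<in>UNIV. a2 i j k x y * (\<nu>s x $ k))) * \<tau> $ i * \<tau> $ j) \<ge> \<delta>1"
    using csconv unfolding unif_cstar_convex_def a2_def sum_kl by blast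
  obtain h \<epsilon> \<delta>0 where H1: "\<exists>U. open U \<and> closure \<Omega> \<subseteq> U \<and> Ck 2 U h" and H2: "\<epsilon> > 0" "\<delta>0 > 0"
    and H3: "\<forall>x\<in>frontier \<Omega>. grad h x = \<nu> x" and H4: "\<forall>x\<in>strip \<Omega> \<epsilon>. h x < 0"
    and H5: "\<forall>x\<in>strip \<Omega> \<epsilon>. \<forall>y\<in>\<Omega>s. \<forall>\<xi>::real^'n.
        (\<Sum>i\<in>UNIV. \<Sum>j\<in>UNIV. (D2 h i j x - (\<Sum>k\<in>UNIV. a1 i j k x y * (grad h x $ k))) * \<xi> $ i * \<xi> $ j) \<ge> \<delta>0 * (norm \<xi>)\<^sup>2"
    using main_h[OF dom bOs ac1 conv1] by blast
  obtain hs \<epsilon>s \<delta>0s where G1: "\<exists>U. open U \<and> closure \<Omega>s \<subseteq> U \<and> Ck 2 U hs" and G2: "\<epsilon>s > 0" "\<delta>0s > 0"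
    and G3: "\<forall>x\<in>frontier \<Omega>s. grad hs x = \<nu>s x" and G4: "\<forall>x\<in>strip \<Omega>s \<epsilon>s. hs x < 0"
    and G5: "\<forall>x\<in>strip \<Omega>s \<epsilon>s. \<forall>y\<in>\<Omega>. \<forall>\<xi>::real^'n.
        (\<Sum>i\<in>UNIV. \<Sum>j\<in>UNIV. (D2 hs i j x - (\<Sum>k\<in>UNIV. a2 i j k x y * (grad hs x $ k))) * \<xi> $ i * \<xi> $ j) \<ge> \<delta>0s * (norm \<xi>)\<^sup>2"
    using main_h[OF doms bO ac2 conv2] by blast
  have H5': "\<forall>x\<in>strip \<Omega> \<epsilon>. \<forall>y\<in>\<Omega>s. \<forall>\<xi>::real^'n.
        (\<Sum>i\<in>UNIV. \<Sum>j\<in>UNIV. (D2 h i j x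
            - (\<Sum>l\<in>UNIV. \<Sum>k\<in>UNIV. cinv c x y l k * cXXY c i j l x y * (grad h x $ k)))
          * \<xi> $ i * \<xi> $ j) \<ge> \<delta>0 * (norm \<xi>)\<^sup>2"
    using H5 unfolding a1_def sum_swap_lk .
  have G5': "\<forall>y\<in>strip \<Omega>s \<epsilon>s. \<forall>x\<in>\<Omega>. \<forall>\<xi>::real^'n.
        (\<Sum>i\<in>UNIV. \<Sum>j\<in>UNIV. (D2 hs i j y
            - (\<Sum>k\<in>UNIV. \<Sum>l\<in>UNIV. cinv c x y k l * cXYY c l i j x y * (grad hs y $ k)))
          * \<xi> $ i * \<xi> $ j) \<ge> \<delta>0s * (norm \<xi>)\<^sup>2"
    using G5 unfolding a2_def sum_kl .
  show ?thesis
    by (rule exI[of _ h], rule exI[of _ hs], rule exI[of _ \<epsilon>], rule exI[of _ \<epsilon>s],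
        rule exI[of _ \<delta>0], rule exI[of _ \<delta>0s])
       (intro conjI H1 G1 H2 G2 H3 G3 H4 G4 H5' G5')
qed


end
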